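(* For the anonymous MIS algorithm described in the context, let $\mathcal{X}$ be an alive connected candidate set of a configuration $\gamma$, and let $t$ be a valid set of moves in $\gamma$ consisting only of Withdrawal? moves on nodes of $\mathcal{X}$. Let $\gamma'$ be the random configuration obtained by executing $t$ from $\gamma$. Then, conditioned on the event that $\mathcal{X}$ vanishes in the transition $\gamma\xrightarrow{t}\gamma'$ (assumed to have positive probability), the probability that $\beta(\gamma')\setminus\beta(\gamma)\neq\emptyset$ is at least $\frac23$.
   Context: $G=(V,E)$ is a finite simple undirected graph; $N(u)$ is the open neighbourhood of $u$. A configuration assigns to each node $u$ a value $s_u\in\{\bot,\top\}$ (written $s_u^\gamma$ in configuration $\gamma$). A rule "guard $\to$ command" is enabled on $u$ in $\gamma$ if its guard holds there. A set $t$ of moves $(u,r)$ is valid in $\gamma$ if it is nonempty, each $r$ is enabled on $u$ in $\gamma$, and no node appears in two moves; executing $t$ from $\gamma$ means all nodes of $t$ execute their commands simultaneously from the values in $\gamma$, with independent random choices, the other nodes keeping their values. The algorithm has the rules: (Candidacy) $s_u=\bot\wedge\forall v\in N(u),\ s_v=\bot\ \to\ s_u:=\top$. (Withdrawal?) $s_u=\top\wedge\exists v\in N(u),\ s_v=\top\ \to$ with probability $\frac12$ (independently) set $s_u:=\bot$, otherwise leave it unchanged. $\beta(\gamma)=\{u\in V: s_u^\gamma=\top\text{ and }\forall v\in N(u),\ s_v^\gamma=\bot\}$. A set $\mathcal{X}\subseteq V$ is a candidate set of $\gamma$ if every $u\in\mathcal{X}$ has $s_u^\gamma=\top$ and every $v\in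 N(u)$ with $s_v^\gamma=\top$ belongs to $\mathcal{X}$; it is a connected candidate set if moreover it induces a connected subgraph of $G$. A candidate set $\mathcal{X}$ of $\gamma$ is alive in $\gamma$ if Withdrawal? is enabled on at least one node of $\mathcal{X}$ (for connected candidate sets this is equivalent to $|\mathcal{X}|\ge 2$). In a transition $\gamma\to\gamma'$, an alive candidate set $\mathcal{X}$ of $\gamma$ vanishes if every $u\in\mathcal{X}$ satisfies $s_u^{\gamma'}=\bot$ or $u\in\beta(\gamma')$. *)

theory Defs
  imports "HOL-Probability.Probability"
begin

text \<open>A configuration is a function
  'a \<Rightarrow> bool, where True encodes top and False encodes bot.\<close>

definition simple_graph :: "'a set \<Rightarrow> ('a \<Rightarrow> 'a \<Rightarrow> bool) \<Rightarrow> bool" where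
  "simple_graph V E \<longleftrightarrow> finite V \<and> (\<forall>u v. E u v \<longrightarrow> u \<in> V \<and> v \<in> V)
     \<and> (\<forall>u v. E u v \<longrightarrow> E v u) \<and> (\<forall>u. \<not> E u u)"

definition nbrs :: "'a set \<Rightarrow> ('a \<Rightarrow> 'a \<Rightarrow> bool) \<Rightarrow> 'a \<Rightarrow> 'a set" where
  "nbrs V E u = {v \<in> V. E u v}"

definition withdrawal_enabled :: "'a set \<Rightarrow> ('a \<Rightarrow> 'a \<Rightarrow> bool) \<Rightarrow> ('a \<Rightarrow> bool) \<Rightarrow> 'a \<Rightarrow> bool" where
  "withdrawal_enabled V E \<gamma> u \<longleftrightarrow> \<gamma> u \<and> (\<exists>v \<in> nbrs V E u. \<gamma> v)"

definition beta :: "'a set \<Rightarrow> ('a \<Rightarrow> 'a \<Rightarrow> bool) \<Rightarrow> ('a \<Rightarrow> bool) \<Rightarrow> 'a set" where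
  "beta V E \<gamma> = {u \<in> V. \<gamma> u \<and> (\<forall>v \<in> nbrs V E u. \<not> \<gamma> v)}"

definition candidate_set :: "'a set \<Rightarrow> ('a \<Rightarrow> 'a \<Rightarrow> bool) \<Rightarrow> ('a \<Rightarrow> bool) \<Rightarrow> 'a set \<Rightarrow> bool" where
  "candidate_set V E \<gamma> X \<longleftrightarrow> X \<subseteq> V \<and>
     (\<forall>u \<in> X. \<gamma> u \<and> (\<forall>v \<in> nbrs V E u. \<gamma> v \<longrightarrow> v \<in> X))"

definition induces_connected :: "('a \<Rightarrow> 'a \<Rightarrow> bool) \<Rightarrow> 'a set \<Rightarrow> bool" where
  "induces_connected E X \<longleftrightarrow> X \<noteq> {} \<and>
     (\<forall>u \<in> X. \<forall>v \<in> X. (\<lambda>a b. a \<in> X \<and> b \<in> X \<and> E a b)\<^sup>*\<^sup>* u v)"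

definition connected_candidate_set :: "'a set \<Rightarrow> ('a \<Rightarrow> 'a \<Rightarrow> bool) \<Rightarrow> ('a \<Rightarrow> bool) \<Rightarrow> 'a set \<Rightarrow> bool" where
  "connected_candidate_set V E \<gamma> X \<longleftrightarrow> candidate_set V E \<gamma> X \<and> induces_connected E X"

definition alive :: "'a set \<Rightarrow> ('a \<Rightarrow> 'a \<Rightarrow> bool) \<Rightarrow> ('a \<Rightarrow> bool) \<Rightarrow> 'a set \<Rightarrow> bool" where
  "alive V E \<gamma> X \<longleftrightarrow> candidate_set V E \<gamma> X \<and> (\<exists>u \<in> X. withdrawal_enabled V E \<gamma> u)"

definition vanishes :: "'a set \<Rightarrow> ('a \<Rightarrow> 'a \<Rightarrow> bool) \<Rightarrow> ('a \<Rightarrow> bool) \<Rightarrow> 'a set \<Rightarrow> bool" where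
  "vanishes V E \<gamma>' X \<longleftrightarrow> (\<forall>u \<in> X. \<not> \<gamma>' u \<or> u \<in> beta V E \<gamma>')"

text \<open>A valid set of moves consisting only of Withdrawal? moves is identified with its
  (nonempty) set t of nodes, each of which has Withdrawal? enabled.  Executing it: every
  node of t independently with probability 1/2 sets its value to bot, otherwise keeps it.
  The outcome is determined by the set S \<subseteq> t of nodes that withdrew; S is uniformly
  distributed on Pow t (= product of independent fair coins).\<close>
definition valid_withdrawal_moves :: "'a set \<Rightarrow> ('a \<Rightarrow> 'a \<Rightarrow> bool) \<Rightarrow> ('a \<Rightarrow> bool) \<Rightarrow> 'a set \<Rightarrow> bool" where
  "valid_withdrawal_moves V E \<gamma> t \<longleftrightarrow> t \<noteq> {} \<and> t \<subseteq> V \<and> (\<forall>u \<in> t. withdrawal_enabled V E \<gamma> u)"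

definition exec_withdrawals :: "('a \<Rightarrow> bool) \<Rightarrow> 'a set \<Rightarrow> ('a \<Rightarrow> bool)" where
  "exec_withdrawals \<gamma> S = (\<lambda>u. if u \<in> S then False else \<gamma> u)"

definition step_distr :: "('a \<Rightarrow> bool) \<Rightarrow> 'a set \<Rightarrow> ('a \<Rightarrow> bool) pmf" where
  "step_distr \<gamma> t = map_pmf (exec_withdrawals \<gamma>) (pmf_of_set (Pow t))"

end

theory Submission
  imports Defs
begin

lemma prob_step:
  assumes "finite t"
  shows "measure_pmf.prob (step_distr \<gamma> t) {g. Q g} = card {S \<in> Pow t. Q (exec_withdrawals \<gamma> S)} / card (Pow t)"
proof -
  have "measure_pmf.prob (step_distr \<gamma> t) {g. Q g}
      = measure_pmf.prob (pmf_of_set (Pow t)) (exec_withdrawals \<gamma> -` {g. Q g})"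
    by (simp add: step_distr_def)
  also have "\<dots> = card (Pow t \<inter> (exec_withdrawals \<gamma> -` {g. Q g})) / card (Pow t)"
    using assms by (subst measure_pmf_of_set) auto
  also have "Pow t \<inter> (exec_withdrawals \<gamma> -` {g. Q g}) = {S \<in> Pow t. Q (exec_withdrawals \<gamma> S)}"
    by auto
  finally show ?thesis .
qed

theorem mainTheorem15:
  fixes V :: "'a set" and E :: "'a \<Rightarrow> 'a \<Rightarrow> bool" and \<gamma> :: "'a \<Rightarrow> bool"
    and X t :: "'a set"
  assumes "simple_graph V E"
    and "connected_candidate_set V E \<gamma> X"
    and "alive V E \<gamma> X"
    and "valid_withdrawal_moves V E \<gamma> t"
    and "t \<subseteq> X"
    and "measure_pmf.prob (step_distr \<gamma> t) {\<gamma>'. vanishes V E \<gamma>' X} > 0"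
  shows "measure_pmf.prob (step_distr \<gamma> t)
            {\<gamma>'. vanishes V E \<gamma>' X \<and> beta V E \<gamma>' - beta V E \<gamma> \<noteq> {}}
         / measure_pmf.prob (step_distr \<gamma> t) {\<gamma>'. vanishes V E \<gamma>' X} \<ge> 2 / 3"
proof -
  have G: "finite V" "\<And>u v. E u v \<Longrightarrow> u \<in> V \<and> v \<in> V" "\<And>u v. E u v \<Longrightarrow> E v u" "\<And>u. \<not> E u u"
    using assms(1) unfolding simple_graph_def by blast+
  have XV: "X \<subseteq> V" and Xtop: "\<And>u. u \<in> X \<Longrightarrow> \<gamma> u"
    and Xcl: "\<And>u v. u \<in> X \<Longrightarrow> v \<in> V \<Longrightarrow> E u v \<Longrightarrow> \<gamma> v \<Longrightarrow> v \<in> X"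
    using assms(2) unfolding connected_candidate_set_def candidate_set_def nbrs_def by blast+
  have conn: "\<And>u v. u \<in> X \<Longrightarrow> v \<in> X \<Longrightarrow> (\<lambda>a b. a \<in> X \<and> b \<in> X \<and> E a b)\<^sup>*\<^sup>* u v"
    using assms(2) unfolding connected_candidate_set_def induces_connected_def by blast
  obtain a b where ab: "a \<in> X" "b \<in> X" "a \<noteq> b"
  proof -
    obtain u where u: "u \<in> X" "withdrawal_enabled V E \<gamma> u" using assms(3) unfolding alive_def by blast
    then obtain v where v: "v \<in> V" "E u v" "\<gamma> v" unfolding withdrawal_enabled_def nbrs_def by blast
    have "v \<in> X" using Xcl u v by blast
    moreover have "u \<noteq> v" using v G(4) by blast
    ultimately show ?thesis using that u by blast
  qed
  have notbeta: "u \<notin> beta V E \<gamma>" if "u \<in> X" for u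
  proof -
    obtain w where w: "w \<in> X" "w \<noteq> u" using ab by blast
    have "(\<lambda>a b. a \<in> X \<and> b \<in> X \<and> E a b)\<^sup>*\<^sup>* u w" using conn that w by blast
    then obtain c where "c \<in> X" "E u c"
      using w(2) by (cases rule: converse_rtranclpE) auto
    then show ?thesis using Xtop G(2) unfolding beta_def nbrs_def by blast
  qed
  have ft: "finite t" using assms(4) G(1) unfolding valid_withdrawal_moves_def
    using finite_subset by blast
  have L1: "beta V E (exec_withdrawals \<gamma> S) - beta V E \<gamma> \<noteq> {}"
    if "vanishes V E (exec_withdrawals \<gamma> S) X" "u \<in> X" "u \<notin> S" for S u
  proof -
    have "exec_withdrawals \<gamma> S u" using that Xtop unfolding exec_withdrawals_def by simp
    then have "u \<in> beta V E (exec_withdrawals \<gamma> S)" using that unfolding vanishes_def by blast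
    then show ?thesis using notbeta that(2) by blast
  qed
  define A where "A = {S \<in> Pow t. vanishes V E (exec_withdrawals \<gamma> S) X \<and>
       beta V E (exec_withdrawals \<gamma> S) - beta V E \<gamma> \<noteq> {}}"
  define B where "B = {S \<in> Pow t. vanishes V E (exec_withdrawals \<gamma> S) X}"
  have AB: "A \<subseteq> B" unfolding A_def B_def by blast
  have fB: "finite B" unfolding B_def using ft by simp
  have XS: "X \<subseteq> S" if S: "S \<in> B - A" for S
  proof
    fix u assume u: "u \<in> X"
    show "u \<in> S"
    proof (rule ccontr)
      assume "u \<notin> S"
      moreover have "vanishes V E (exec_withdrawals \<gamma> S) X" using S unfolding B_def by blast
      ultimately have "beta V E (exec_withdrawals \<gamma> S) - beta V E \<gamma> \<noteq> {}" using L1 u by blast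
      then have "S \<in> A" using S unfolding A_def B_def by blast
      then show False using S by blast
    qed
  qed
  have BA: "B - A \<subseteq> {t}"
  proof
    fix S assume S: "S \<in> B - A"
    then have "S \<subseteq> t" unfolding B_def by blast
    moreover have "X \<subseteq> S" using XS S by blast
    ultimately show "S \<in> {t}" using assms(5) by blast
  qed
  have "card B / card (Pow t) > 0" using assms(6) unfolding prob_step[OF ft] B_def .
  then have pos: "card B > 0" by (cases "card B = 0") auto
  have key: "2 * card B \<le> 3 * card A"
  proof (cases "t \<in> B - A")
    case False
    then have "A = B" using BA AB by blast
    then show ?thesis by simp
  next
    case True
    then have tX: "t = X" using XS assms(5) by blast
    have inA: "X - {c} \<in> A" if c: "c \<in> X" for c
    proof -
      let ?g = "exec_withdrawals \<gamma> (X - {c})"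
      have "vanishes V E ?g X"
        unfolding vanishes_def
      proof
        fix u assume u: "u \<in> X"
        show "\<not> ?g u \<or> u \<in> beta V E ?g"
        proof (cases "u = c")
          case True
          have "\<not> ?g v" if "v \<in> nbrs V E u" for v
          proof
            assume gv: "?g v"
            have v: "v \<in> V" "E u v" using that unfolding nbrs_def by auto
            show False
            proof (cases "v \<in> X")
              case True
              then have "v = c" using gv unfolding exec_withdrawals_def by (auto split: if_splits)
              then show False using v G(4) \<open>u = c\<close> by blast
            next
              case False
              then have "\<gamma> v" using gv unfolding exec_withdrawals_def by (auto split: if_splits)
              then show False using Xcl u v False by blast
            qed
          qed
          moreover have "?g u" using True u Xtop unfolding exec_withdrawals_def by simp
          ultimately show ?thesis using u XV unfolding beta_def by blast
        next
          case False
          then show ?thesis using u unfolding exec_withdrawals_def by simp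
        qed
      qed
      moreover have "beta V E ?g - beta V E \<gamma> \<noteq> {}" using L1 calculation c by blast
      ultimately show ?thesis unfolding A_def using tX by blast
    qed
    have "{X - {a}, X - {b}} \<subseteq> A" using inA ab by blast
    moreover have "X - {a} \<noteq> X - {b}" using ab by blast
    moreover have "finite A" using AB fB finite_subset by blast
    ultimately have "card A \<ge> 2"
      by (metis card_2_iff card_mono)
    moreover have "B = insert t A" using True BA AB by blast
    moreover have "t \<notin> A" using True by blast
    ultimately show ?thesis using \<open>finite A\<close> by simp
  qed
  have "measure_pmf.prob (step_distr \<gamma> t)
            {\<gamma>'. vanishes V E \<gamma>' X \<and> beta V E \<gamma>' - beta V E \<gamma> \<noteq> {}}
         / measure_pmf.prob (step_distr \<gamma> t) {\<gamma>'. vanishes V E \<gamma>' X} = card A / card B"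
    unfolding prob_step[OF ft] A_def B_def using ft by (simp add: card_Pow)
  also have "\<dots> \<ge> 2 / 3"
  proof -
    have "real (2 * card B) \<le> real (3 * card A)" using key by linarith
    then show ?thesis using pos by (simp add: field_simps)
  qed
  finally show ?thesis by simp
qed

end
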